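(* Let $\mathscr{D}_n^B$ be the set of type $B_n$ derangements, and suppose the flag major index satisfies $$\sum_{\pi\in\mathscr{D}_n^B}q^{\mathrm{fmaj}(\pi)}=\sum_{0\le k\le n}(-1)^k q^{k(k-1)}[2n]_q[2n-2]_q\cdots[2k+2]_q$$ (empty product for $k=n$ equal to $1$). Then for every $m\ge 2$ and every $0\le r\le m-1$, $$\lim_{n\to\infty}\frac{\left|\{\pi\in\mathscr{D}_n^B:\ \mathrm{fmaj}(\pi)\equiv r\pmod m\}\right|}{|\mathscr{D}_n^B|}=\frac1m ,$$ i.e. the flag major index over $B_n$-derangements has the balanced property.
   Context: $[t]_q=1+q+\cdots+q^{t-1}$. A type $B_n$ permutation is a signed permutation $\pi$ of $[n]$ (a bijection $\pi$ of $\{\pm1,\dots,\pm n\}$ with $\pi(-i)=-\pi(i)$); a type $B_n$ derangement is one with $\pi(i)\ne i$ for all $1\le i\le n$. The flag major index is $\mathrm{fmaj}(\pi)=2\,\mathrm{maj}(\pi)+\mathrm{neg}(\pi)$ (Adin–Roichman), with $\mathrm{neg}(\pi)$ the number of negative entries; its generating function over $\mathscr{D}_n^B$ is the displayed formula. A statistic $\xi$ on sets $Q_n$ has the balanced property if for every $m\ge 2$ and every $0\le r\le m-1$, $\lim_{n\to\infty}|\{\pi\in Q_n:\xi(\pi)\equiv r \pmod m\}|/|Q_n| = 1/m$. *)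

theory Defs
  imports "HOL-Analysis.Analysis"
begin

text \<open>Signed permutations of [n], as functions on int, extended by the identity
outside {+-1,...,+-n}.\<close>

definition signed_domain :: "nat \<Rightarrow> int set" where
  "signed_domain n = {i. i \<noteq> 0 \<and> \<bar>i\<bar> \<le> int n}"

definition signed_perms :: "nat \<Rightarrow> (int \<Rightarrow> int) set" where
  "signed_perms n = {\<pi>. bij_betw \<pi> (signed_domain n) (signed_domain n)
      \<and> (\<forall>i \<in> signed_domain n. \<pi> (- i) = - \<pi> i)
      \<and> (\<forall>i. i \<notin> signed_domain n \<longrightarrow> \<pi> i = i)}"

definition B_derangements :: "nat \<Rightarrow> (int \<Rightarrow> int) set" where
  "B_derangements n = {\<pi> \<in> signed_perms n. \<forall>i::int. 1 \<le> i \<and> i \<le> int n \<longrightarrow> \<pi> i \<noteq> i}"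

text \<open>Major index w.r.t. the usual order on integers, number of negative entries,
and flag major index (Adin--Roichman).\<close>

definition maj_B :: "nat \<Rightarrow> (int \<Rightarrow> int) \<Rightarrow> nat" where
  "maj_B n \<pi> = (\<Sum>i \<in> {i. 1 \<le> i \<and> i < n \<and> \<pi> (int i) > \<pi> (int i + 1)}. i)"

definition neg_B :: "nat \<Rightarrow> (int \<Rightarrow> int) \<Rightarrow> nat" where
  "neg_B n \<pi> = card {i::nat. 1 \<le> i \<and> i \<le> n \<and> \<pi> (int i) < 0}"

definition fmaj :: "nat \<Rightarrow> (int \<Rightarrow> int) \<Rightarrow> nat" where
  "fmaj n \<pi> = 2 * maj_B n \<pi> + neg_B n \<pi>"

definition qint :: "nat \<Rightarrow> 'a::comm_ring_1 \<Rightarrow> 'a" where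
  "qint t q = (\<Sum>i<t. q ^ i)"

end

theory Submission
  imports Defs
begin

definition GG :: "nat \<Rightarrow> 'a::comm_ring_1 \<Rightarrow> 'a" where
  "GG n q = (\<Sum>k = 0..n. (-1) ^ k * q ^ (k * (k - 1)) * (\<Prod>j = k + 1..n. qint (2 * j) q))"

lemma GG_0[simp]: "GG 0 q = 1"
  by (simp add: GG_def)

lemma GG_Suc: "GG (Suc n) q = qint (2 * Suc n) q * GG n q + (-1) ^ Suc n * q ^ (Suc n * n)"
proof -
  have "GG (Suc n) q = (\<Sum>k = 0..n. (-1) ^ k * q ^ (k * (k - 1)) * (\<Prod>j = k + 1..Suc n. qint (2 * j) q))
        + (-1) ^ Suc n * q ^ (Suc n * n)"
    by (simp add: GG_def)
  also have "(\<Sum>k = 0..n. (-1) ^ k * q ^ (k * (k - 1)) * (\<Prod>j = k + 1..Suc n. qint (2 * j) q))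
     = (\<Sum>k = 0..n. qint (2 * Suc n) q * ((-1) ^ k * q ^ (k * (k - 1)) * (\<Prod>j = k + 1..n. qint (2 * j) q)))"
    by (intro sum.cong refl) (simp add: prod.nat_ivl_Suc' mult_ac)
  also have "\<dots> = qint (2 * Suc n) q * GG n q"
    by (simp add: GG_def sum_distrib_left)
  finally show ?thesis .
qed

lemma GG_of_real: "GG n (of_real x :: complex) = of_real (GG n x)"
  by (simp add: GG_def qint_def)

lemma GG_one_ge: "GG n (1::real) \<ge> fact n"
proof (induction n)
  case 0 then show ?case by simp
next
  case (Suc n)
  define a where "a = GG n (1::real)"
  have q: "qint (2 * Suc n) (1::real) = 2 * (real n + 1)"
    by (simp add: qint_def)
  have f1: "fact n \<ge> (1::real)" by simp
  have a1: "a \<ge> 1" using Suc f1 unfolding a_def by linarith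
  have "(real n + 1) * a \<ge> 1 * 1"
    using a1 by (intro mult_mono) auto
  moreover have m1: "(-1::real) ^ Suc n \<ge> -1"
    by (cases "even (Suc n)") auto
  moreover have "(real n + 1) * a \<ge> (real n + 1) * fact n"
    using Suc unfolding a_def by (intro mult_left_mono) auto
  ultimately have "2 * (real n + 1) * a + (-1) ^ Suc n \<ge> (real n + 1) * fact n"
    by linarith
  moreover have "GG (Suc n) (1::real) = 2 * (real n + 1) * a + (-1) ^ Suc n"
    unfolding GG_Suc q a_def by (simp add: mult_ac)
  moreover have "(fact (Suc n) :: real) = (real n + 1) * fact n"
    by (simp add: algebra_simps)
  ultimately show ?case by linarith
qed

lemma qint_bound:
  fixes z :: complex
  assumes "z \<noteq> 1" "norm z = 1"
  shows "norm (qint t z) \<le> 2 / norm (z - 1)"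
proof -
  have "qint t z = (z ^ t - 1) / (z - 1)"
    unfolding qint_def using assms by (simp add: geometric_sum)
  moreover have "norm (z ^ t - 1) \<le> 2"
    using norm_triangle_ineq4[of "z^t" 1] assms by (simp add: norm_power)
  ultimately show ?thesis
    using assms by (simp add: norm_divide divide_right_mono)
qed

lemma GG_bound:
  fixes z :: complex
  assumes "norm z = 1" "\<And>t. norm (qint t z) \<le> C" "C \<ge> 0"
  shows "norm (GG n z) \<le> (C + 1) ^ n"
proof (induction n)
  case 0 then show ?case by simp
next
  case (Suc n)
  have "norm (GG (Suc n) z) \<le> norm (qint (2 * Suc n) z) * norm (GG n z) + 1"
    unfolding GG_Suc using norm_triangle_ineq[of "qint (2 * Suc n) z * GG n z" "(-1) ^ Suc n * z ^ (Suc n * n)"]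
    by (simp add: norm_mult norm_power assms(1))
  also have "\<dots> \<le> C * (C + 1) ^ n + 1"
    using Suc assms by (intro add_mono mult_mono) auto
  also have "\<dots> \<le> (C + 1) ^ Suc n"
  proof -
    have "(1::real) \<le> (C + 1) ^ n" using assms by (intro one_le_power) auto
    thus ?thesis by (simp add: algebra_simps)
  qed
  finally show ?case .
qed

lemma pow_over_fact: "(\<lambda>n. B ^ n / fact n :: real) \<longlonglongrightarrow> 0"
proof -
  have "(\<lambda>n. inverse (fact n) * B ^ n :: real) \<longlonglongrightarrow> 0"
    by (rule summable_LIMSEQ_zero[OF summable_exp])
  thus ?thesis by (simp add: divide_inverse mult.commute)
qed

lemma omega_pow:
  "exp (2 * of_real pi * \<i> * of_nat 1 / of_nat m) ^ t = exp (2 * of_real pi * \<i> * of_nat t / of_nat m)"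
  by (subst exp_of_nat_mult[symmetric]) (simp add: field_simps)

lemma root_sum:
  assumes "m \<ge> 1"
  defines "\<omega> \<equiv> exp (2 * of_real pi * \<i> * of_nat 1 / of_nat m)"
  shows "(\<Sum>j<m. \<omega> ^ (j * t)) = (if m dvd t then of_nat m else 0)"
proof (cases "m dvd t")
  case True
  hence "\<omega> ^ t = 1" unfolding \<omega>_def omega_pow using complex_root_unity_eq_1[OF assms(1)] by simp
  hence "\<omega> ^ (j * t) = 1" for j by (simp add: power_mult mult.commute[of j])
  thus ?thesis using True by simp
next
  case False
  hence ne: "\<omega> ^ t \<noteq> 1" unfolding \<omega>_def omega_pow using complex_root_unity_eq_1[OF assms(1)] by simp
  have wm: "\<omega> ^ m = 1" unfolding \<omega>_def omega_pow using assms(1) exp_two_pi_i by (simp add: mult.assoc)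
  have "(\<Sum>j<m. \<omega> ^ (j * t)) = (\<Sum>j<m. (\<omega> ^ t) ^ j)"
    by (intro sum.cong refl) (metis power_mult mult.commute)
  also have "\<dots> = ((\<omega> ^ t) ^ m - 1) / (\<omega> ^ t - 1)"
    using ne by (rule geometric_sum)
  also have "(\<omega> ^ t) ^ m = 1"
    by (metis power_mult mult.commute power_one wm)
  finally show ?thesis using False by simp
qed

theorem mainTheorem7:
  assumes gf: "\<And>(n::nat) (q::complex).
      (\<Sum>\<pi> \<in> B_derangements n. q ^ fmaj n \<pi>)
        = (\<Sum>k = 0..n. (-1) ^ k * q ^ (k * (k - 1)) * (\<Prod>j = k + 1..n. qint (2 * j) q))"
  shows "\<forall>m::nat. \<forall>r::nat. 2 \<le> m \<and> r < m \<longrightarrow>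
     (\<lambda>n. real (card {\<pi> \<in> B_derangements n. fmaj n \<pi> mod m = r})
            / real (card (B_derangements n))) \<longlonglongrightarrow> 1 / real m"
proof (intro allI impI)
  fix m r :: nat
  assume mr: "2 \<le> m \<and> r < m"
  hence m1: "m \<ge> 1" by simp
  have gf': "(\<Sum>\<pi> \<in> B_derangements n. q ^ fmaj n \<pi>) = GG n q" for n and q :: complex
    using gf unfolding GG_def .
  define N where "N n = GG n (1::real)" for n
  have Npos: "N n \<ge> fact n" for n unfolding N_def by (rule GG_one_ge)
  have Ngt: "N n > 0" for n using Npos[of n] by (smt (verit) fact_gt_zero)
  have cardB: "real (card (B_derangements n)) = N n" for n
  proof -
    have "complex_of_nat (card (B_derangements n)) = (\<Sum>\<pi> \<in> B_derangements n. 1 ^ fmaj n \<pi>)"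
      by simp
    also have "\<dots> = GG n (of_real 1)" by (simp only: of_real_1 gf')
    also have "\<dots> = of_real (N n)" unfolding GG_of_real N_def ..
    finally show ?thesis by (metis of_real_eq_iff of_real_of_nat_eq)
  qed
  have fin: "finite (B_derangements n)" for n
    using cardB[of n] Ngt[of n] card.infinite by fastforce
  define \<omega> where "\<omega> = exp (2 * of_real pi * \<i> * of_nat 1 / of_nat m)"
  define A where "A n = {\<pi> \<in> B_derangements n. fmaj n \<pi> mod m = r}" for n
  have key: "of_nat (card (A n)) * of_nat m = (\<Sum>j<m. \<omega> ^ (j * (m - r)) * GG n (\<omega> ^ j))" for n
  proof -
    have "(\<Sum>j<m. \<omega> ^ (j * (m - r)) * GG n (\<omega> ^ j))
        = (\<Sum>j<m. \<Sum>\<pi> \<in> B_derangements n. \<omega> ^ (j * (fmaj n \<pi> + (m - r))))"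
      unfolding gf'[symmetric]
      by (simp add: sum_distrib_left power_add power_mult[symmetric] algebra_simps)
    also have "\<dots> = (\<Sum>\<pi> \<in> B_derangements n. \<Sum>j<m. \<omega> ^ (j * (fmaj n \<pi> + (m - r))))"
      by (rule sum.swap)
    also have "\<dots> = (\<Sum>\<pi> \<in> B_derangements n. if fmaj n \<pi> mod m = r then of_nat m else 0)"
    proof (intro sum.cong refl)
      fix \<pi>
      have "m dvd (fmaj n \<pi> + (m - r)) \<longleftrightarrow> fmaj n \<pi> mod m = r"
      proof -
        define a where "a = fmaj n \<pi> mod m"
        have lt: "a < m" using mr unfolding a_def by simp
        have "m dvd (fmaj n \<pi> + (m - r)) \<longleftrightarrow> (a + (m - r)) mod m = 0"
          unfolding a_def by (simp add: dvd_eq_mod_eq_0 mod_add_left_eq)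
        also have "\<dots> \<longleftrightarrow> a = r"
        proof (cases "r \<le> a")
          case True
          have "a + (m - r) = (a - r) + m" using True mr by simp
          hence "(a + (m - r)) mod m = ((a - r) + m) mod m" by (simp only:)
          also have "\<dots> = (a - r) mod m" by (rule mod_add_self2)
          also have "\<dots> = a - r" using lt by (intro mod_less) simp
          finally have "(a + (m - r)) mod m = a - r" .
          thus ?thesis using True by simp
        next
          case False
          have "(a + (m - r)) mod m = a + (m - r)" by (rule mod_less) (use lt mr False in linarith)
          thus ?thesis using False mr by simp
        qed
        finally show ?thesis unfolding a_def .
      qed
      thus "(\<Sum>j<m. \<omega> ^ (j * (fmaj n \<pi> + (m - r)))) = (if fmaj n \<pi> mod m = r then of_nat m else 0)"
        unfolding \<omega>_def using root_sum[OF m1] by simp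
    qed
    also have "\<dots> = (\<Sum>\<pi> \<in> A n. of_nat m)"
      unfolding A_def by (rule sum.inter_filter[symmetric, OF fin])
    also have "\<dots> = of_nat (card (A n)) * of_nat m" by simp
    finally show ?thesis by simp
  qed
  define J where "J = {1..<m}"
  have zeta: "norm (\<omega> ^ j) = 1 \<and> \<omega> ^ j \<noteq> 1" if "j \<in> J" for j
  proof
    show "norm (\<omega> ^ j) = 1" unfolding \<omega>_def by (simp add: norm_power norm_exp_eq_Re)
    show "\<omega> ^ j \<noteq> 1" unfolding \<omega>_def omega_pow
      using complex_root_unity_eq_1[OF m1, of j] that unfolding J_def
      by (auto dest: dvd_imp_le)
  qed
  have lim0: "(\<lambda>n. GG n (\<omega> ^ j) / of_real (N n)) \<longlonglongrightarrow> 0" if "j \<in> J" for j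
  proof -
    define C where "C = 2 / norm (\<omega> ^ j - 1)"
    have C0: "C \<ge> 0" unfolding C_def by simp
    have qb: "norm (qint t (\<omega> ^ j)) \<le> C" for t
      unfolding C_def using zeta[OF that] by (intro qint_bound) auto
    show ?thesis
    proof (rule Lim_null_comparison[OF _ pow_over_fact[of "C + 1"]])
      show "\<forall>\<^sub>F n in sequentially. norm (GG n (\<omega> ^ j) / of_real (N n)) \<le> (C + 1) ^ n / fact n"
      proof (intro always_eventually allI)
        fix n
        have "norm (GG n (\<omega> ^ j) / of_real (N n)) = norm (GG n (\<omega> ^ j)) / N n"
          using Ngt[of n] by (simp add: norm_divide)
        also have "\<dots> \<le> (C + 1) ^ n / N n"
          using GG_bound[of "\<omega> ^ j" C n] zeta[OF that] qb C0 Ngt[of n]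
          by (intro divide_right_mono) auto
        also have "\<dots> \<le> (C + 1) ^ n / fact n"
          using Npos[of n] C0 Ngt[of n] by (intro divide_left_mono) auto
        finally show "norm (GG n (\<omega> ^ j) / of_real (N n)) \<le> (C + 1) ^ n / fact n" .
      qed
    qed
  qed
  have split: "(\<Sum>j<m. f j) = f 0 + (\<Sum>j\<in>J. f j)" for f :: "nat \<Rightarrow> complex"
    unfolding J_def lessThan_atLeast0 using m1 by (subst sum.atLeast_Suc_lessThan) auto
  have expr: "complex_of_real (real (card (A n)) / real (card (B_derangements n)))
      = 1 / of_nat m + 1 / of_nat m * (\<Sum>j\<in>J. \<omega> ^ (j * (m - r)) * (GG n (\<omega> ^ j) / of_real (N n)))" for n
  proof -
    have Nc: "complex_of_real (N n) \<noteq> 0" using Ngt[of n] by simp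
    have mc: "complex_of_nat m \<noteq> 0" using m1 by simp
    have "of_nat (card (A n)) * of_nat m = of_real (N n) + (\<Sum>j\<in>J. \<omega> ^ (j * (m - r)) * GG n (\<omega> ^ j))"
      unfolding key split by (simp add: N_def GG_of_real[symmetric])
    hence "complex_of_nat (card (A n)) = (of_real (N n) + (\<Sum>j\<in>J. \<omega> ^ (j * (m - r)) * GG n (\<omega> ^ j))) / of_nat m"
      using mc by (simp add: field_simps)
    moreover have "(\<Sum>j\<in>J. \<omega> ^ (j * (m - r)) * (GG n (\<omega> ^ j) / of_real (N n)))
        = (\<Sum>j\<in>J. \<omega> ^ (j * (m - r)) * GG n (\<omega> ^ j)) / of_real (N n)"
      by (simp add: sum_divide_distrib)
    ultimately show ?thesis
      unfolding cardB using Nc mc by (simp add: field_simps)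
  qed
  have "(\<lambda>n. 1 / of_nat m + 1 / of_nat m * (\<Sum>j\<in>J. \<omega> ^ (j * (m - r)) * (GG n (\<omega> ^ j) / of_real (N n))))
        \<longlonglongrightarrow> 1 / of_nat m + 1 / of_nat m * (\<Sum>j\<in>J. \<omega> ^ (j * (m - r)) * 0)"
    by (intro tendsto_intros lim0) auto
  hence "(\<lambda>n. complex_of_real (real (card (A n)) / real (card (B_derangements n)))) \<longlonglongrightarrow> complex_of_real (1 / real m)"
    unfolding expr by simp
  thus "(\<lambda>n. real (card {\<pi> \<in> B_derangements n. fmaj n \<pi> mod m = r})
            / real (card (B_derangements n))) \<longlonglongrightarrow> 1 / real m"
    unfolding tendsto_of_real_iff A_def .
qed

end
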